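(* Let $N_7$ be the connected, simply connected nilpotent Lie group with Lie algebra $\mathfrak{n}_7$ spanned by $X_1,\dots,X_7$ with non-trivial brackets $[X_1,X_3]=X_5,\ [X_1,X_4]=X_6,\ [X_1,X_5]=X_7,\ [X_2,X_3]=-X_6,\ [X_2,X_4]=X_5,\ [X_2,X_6]=X_7$. Let $\Gamma_2\subset\mathfrak{n}_7^*/N_7$ be the set of coadjoint orbits of linear functionals $f=\sum_i f_iX_i^*$ with $f_7\neq 0$. Then $\Gamma_2$, with the relative topology of the orbit space $\mathfrak{n}_7^*/N_7$ (quotient topology), is Hausdorff, and $\Gamma_2$ is homeomorphic to $\mathbb R^2\times\mathbb R^*$ via $(f_3,f_4,f_7)\mapsto \mathcal O_{(f_3,f_4,f_7)}$.
   Context: $N_7$ acts on $\mathfrak{n}_7^*$ by the coadjoint action $\mathrm{Ad}^*(g)f=f\circ\mathrm{Ad}(g^{-1})$; $X_1^*,\dots,X_7^*$ is the dual basis. For $f_7\neq0$, every coadjoint orbit with $X_7^*$-coordinate $f_7$ contains exactly one functional of the form $f_3X_3^*+f_4X_4^*+f_7X_7^*$, and $\mathcal O_{(f_3,f_4,f_7)}$ denotes the orbit of this functional; explicitly $\mathcal O_{(f_3,f_4,f_7)}=\{(x_1,x_2,f_3+\frac{x_5^2-x_6^2}{2f_7},f_4+\frac{x_5x_6}{f_7},x_5,x_6,f_7): x_1,x_2,x_5,x_6\in\mathbb R\}$ in coordinates with respect to $X_1^*,\dots,X_7^*$. *)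

theory Defs
  imports "HOL-Analysis.Analysis" "HOL-Library.Numeral_Type"
begin

text \<open>Elements of n7 and of its dual are coordinate vectors in real^7 w.r.t. the bases
  X_1..X_7 resp. X_1^*..X_7^*; the indices are the numerals 1,...,7 of type 7
  (these are seven distinct elements; 7 denotes the residue 0).\<close>

definition n7_bracket :: "real^7 \<Rightarrow> real^7 \<Rightarrow> real^7" where
  "n7_bracket x y = (\<chi> j.
     if j = 5 then (x$1*y$3 - x$3*y$1) + (x$2*y$4 - x$4*y$2)
     else if j = 6 then (x$1*y$4 - x$4*y$1) - (x$2*y$3 - x$3*y$2)
     else if j = 7 then (x$1*y$5 - x$5*y$1) + (x$2*y$6 - x$6*y$2)
     else 0)"

text \<open>Ad(exp Y) = e^{ad Y}; ad Y is nilpotent, so the exponential series is finite.\<close>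
definition n7_Ad :: "real^7 \<Rightarrow> real^7 \<Rightarrow> real^7" where
  "n7_Ad Y Z = (\<Sum>k<7. (1 / fact k) *\<^sub>R (((n7_bracket Y) ^^ k) Z))"

text \<open>Coadjoint action of g = exp Y: Ad*(g) f = f \<circ> Ad(g^{-1}) = f \<circ> Ad(exp(-Y)).
  Since exp : n7 \<rightarrow> N7 is a bijection, Y ranges over all of N7.\<close>
definition n7_coadj :: "real^7 \<Rightarrow> real^7 \<Rightarrow> real^7" where
  "n7_coadj Y f = (\<chi> j. f \<bullet> n7_Ad (- Y) (axis j 1))"

definition coadj_orbit :: "real^7 \<Rightarrow> (real^7) set" where
  "coadj_orbit f = range (\<lambda>Y. n7_coadj Y f)"

definition n7_orbits :: "(real^7) set set" where
  "n7_orbits = range coadj_orbit"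

definition orbit_space :: "(real^7) set topology" where
  "orbit_space = topology (\<lambda>U. U \<subseteq> n7_orbits \<and> open {f. coadj_orbit f \<in> U})"

definition Gamma2 :: "(real^7) set set" where
  "Gamma2 = {S \<in> n7_orbits. \<exists>f\<in>S. f$7 \<noteq> 0}"

definition std_functional :: "real \<Rightarrow> real \<Rightarrow> real \<Rightarrow> real^7" where
  "std_functional a b c = (\<chi> j. if j = 3 then a else if j = 4 then b else if j = 7 then c else 0)"

end

theory Submission
  imports Defs
begin

lemma exhaust_7:
  fixes x :: 7
  shows "x = 1 \<or> x = 2 \<or> x = 3 \<or> x = 4 \<or> x = 5 \<or> x = 6 \<or> x = 7"
proof (induct x)
  case (of_int z)
  then have "z = 0 \<or> z = 1 \<or> z = 2 \<or> z = 3 \<or> z = 4 \<or> z = 5 \<or> z = 6" by fastforce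
  then show ?case by auto
qed

lemma UNIV_7: "UNIV = {1, 2, 3, 4, 5, 6, 7::7}"
  using exhaust_7 by auto

lemma sum_7: "sum f (UNIV::7 set) = f 1 + f 2 + f 3 + f 4 + f 5 + f 6 + f 7"
  unfolding UNIV_7 by (simp add: ac_simps)

lemma vec7_eqI:
  fixes x y :: "real^7"
  assumes "x$1 = y$1" "x$2 = y$2" "x$3 = y$3" "x$4 = y$4" "x$5 = y$5" "x$6 = y$6" "x$7 = y$7"
  shows "x = y"
  unfolding vec_eq_iff
proof
  fix i :: 7
  show "x$i = y$i" using exhaust_7[of i] assms by (elim disjE) simp_all
qed

lemma br_comp:
  "(n7_bracket x y)$1 = 0" "(n7_bracket x y)$2 = 0" "(n7_bracket x y)$3 = 0" "(n7_bracket x y)$4 = 0"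
  "(n7_bracket x y)$5 = (x$1*y$3 - x$3*y$1) + (x$2*y$4 - x$4*y$2)"
  "(n7_bracket x y)$6 = (x$1*y$4 - x$4*y$1) - (x$2*y$3 - x$3*y$2)"
  "(n7_bracket x y)$7 = (x$1*y$5 - x$5*y$1) + (x$2*y$6 - x$6*y$2)"
  by (simp_all add: n7_bracket_def)

lemma br3: "n7_bracket a (n7_bracket a (n7_bracket a z)) = 0"
  by (rule vec7_eqI) (simp_all add: br_comp)

lemma br_zero: "n7_bracket a 0 = 0"
  by (rule vec7_eqI) (simp_all add: br_comp)

lemma brpow: "((n7_bracket a) ^^ (k + 3)) z = 0"
proof -
  have "((n7_bracket a) ^^ (k + 3)) z = ((n7_bracket a) ^^ k) (((n7_bracket a) ^^ 3) z)"
    by (simp add: funpow_add)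
  also have "((n7_bracket a) ^^ 3) z = 0" by (simp add: numeral_3_eq_3 br3)
  also have "(n7_bracket a ^^ k) 0 = 0"
  proof (induct k)
    case (Suc k) then show ?case
      by simp (rule vec7_eqI, simp_all add: br_comp)
  qed simp
  finally show ?thesis .
qed

lemma Ad_formula: "n7_Ad Y Z = Z + n7_bracket Y Z + (1/2) *\<^sub>R n7_bracket Y (n7_bracket Y Z)"
proof -
  have z: "((n7_bracket Y) ^^ k) Z = 0" if "k \<ge> 3" for k
    using brpow[where a=Y and k="k - 3" and z=Z] that by simp
  show ?thesis unfolding n7_Ad_def
    by (simp add: eval_nat_numeral br3 br_zero)
qed

lemma coadj_comp:
  "(n7_coadj Y f)$1 = f$1 + Y$3*f$5 + Y$4*f$6 + Y$5*f$7 - (Y$1*Y$3 + Y$2*Y$4)*f$7/2"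
  "(n7_coadj Y f)$2 = f$2 + Y$4*f$5 - Y$3*f$6 + Y$6*f$7 + (Y$2*Y$3 - Y$1*Y$4)*f$7/2"
  "(n7_coadj Y f)$3 = f$3 - Y$1*f$5 + Y$2*f$6 + ((Y$1)^2 - (Y$2)^2)*f$7/2"
  "(n7_coadj Y f)$4 = f$4 - Y$2*f$5 - Y$1*f$6 + Y$1*Y$2*f$7"
  "(n7_coadj Y f)$5 = f$5 - Y$1*f$7"
  "(n7_coadj Y f)$6 = f$6 - Y$2*f$7"
  "(n7_coadj Y f)$7 = f$7"
  by (simp_all add: n7_coadj_def Ad_formula inner_vec_def sum_7 br_comp axis_def
      algebra_simps power2_eq_square) (simp_all add: field_simps)

definition phi :: "real^7 \<Rightarrow> real \<times> real \<times> real" where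
  "phi f = (f$3 - ((f$5)^2 - (f$6)^2) / (2 * f$7), f$4 - f$5 * f$6 / f$7, f$7)"

lemma phi_inv:
  assumes "f$7 \<noteq> 0"
  shows "phi (n7_coadj Y f) = phi f"
  using assms unfolding phi_def coadj_comp
  by (simp add: field_simps power2_eq_square)

lemma std_comp:
  "std_functional a b c $1 = 0" "std_functional a b c $2 = 0" "std_functional a b c $3 = a"
  "std_functional a b c $4 = b" "std_functional a b c $5 = 0" "std_functional a b c $6 = 0"
  "std_functional a b c $7 = c"
  by (simp_all add: std_functional_def)

lemma phi_std: "phi (std_functional a b c) = (a, b, c)"
  by (simp add: phi_def std_comp)

lemma coadj_zero: "n7_coadj 0 f = f"
  by (rule vec7_eqI) (simp_all add: coadj_comp)

lemma solve:
  assumes h7: "h$7 \<noteq> 0" and e: "phi h = phi g"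
  shows "\<exists>Y. n7_coadj Y h = g"
proof -
  define c where "c = h$7"
  have g7: "g$7 = c" using e by (simp add: phi_def c_def)
  have c0: "c \<noteq> 0" using h7 c_def by simp
  have e3: "h$3 - ((h$5)^2 - (h$6)^2) / (2 * c) = g$3 - ((g$5)^2 - (g$6)^2) / (2 * c)"
    using e g7 by (simp add: phi_def c_def)
  have e4: "h$4 - h$5 * h$6 / c = g$4 - g$5 * g$6 / c"
    using e g7 by (simp add: phi_def c_def)
  define Y :: "real^7" where "Y = (\<chi> i. if i = 1 then (h$5 - g$5) / c else if i = 2 then (h$6 - g$6) / c
      else if i = 5 then (g$1 - h$1) / c else if i = 6 then (g$2 - h$2) / c else 0)"
  have Y: "Y$1 = (h$5 - g$5) / c" "Y$2 = (h$6 - g$6) / c" "Y$3 = 0" "Y$4 = 0"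
     "Y$5 = (g$1 - h$1) / c" "Y$6 = (g$2 - h$2) / c"
    by (simp_all add: Y_def)
  have "n7_coadj Y h = g"
  proof (rule vec7_eqI)
    have h3: "h$3 = g$3 - ((g$5)^2 - (g$6)^2) / (2 * c) + ((h$5)^2 - (h$6)^2) / (2 * c)"
      using e3 by simp
    have h4: "h$4 = g$4 - g$5 * g$6 / c + h$5 * h$6 / c"
      using e4 by simp
    show "n7_coadj Y h $ 3 = g $ 3"
      using c0 unfolding coadj_comp Y c_def[symmetric] h3
      by (simp add: field_simps power2_eq_square; algebra)
    show "n7_coadj Y h $ 4 = g $ 4"
      using c0 unfolding coadj_comp Y c_def[symmetric] h4
      by (simp add: field_simps power2_eq_square; algebra)
  qed (use c0 g7 in \<open>simp_all add: coadj_comp Y c_def[symmetric]\<close>)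
  then show ?thesis by blast
qed

lemma orbit_char:
  assumes "f$7 \<noteq> 0"
  shows "coadj_orbit f = {g. phi g = phi f}"
proof
  show "coadj_orbit f \<subseteq> {g. phi g = phi f}"
    using phi_inv[OF assms] by (auto simp: coadj_orbit_def)
  show "{g. phi g = phi f} \<subseteq> coadj_orbit f"
  proof
    fix g assume "g \<in> {g. phi g = phi f}"
    then have "phi f = phi g" by simp
    then obtain Y where "n7_coadj Y f = g" using solve assms by blast
    then show "g \<in> coadj_orbit f" by (auto simp: coadj_orbit_def)
  qed
qed

lemma orbit_space_open:
  "openin orbit_space U \<longleftrightarrow> U \<subseteq> n7_orbits \<and> open {f. coadj_orbit f \<in> U}"
proof -
  have "istopology (\<lambda>U. U \<subseteq> n7_orbits \<and> open {f. coadj_orbit f \<in> U})"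
    unfolding istopology_def
  proof (rule conjI; intro allI impI)
    fix S T assume "S \<subseteq> n7_orbits \<and> open {f. coadj_orbit f \<in> S}"
      "T \<subseteq> n7_orbits \<and> open {f. coadj_orbit f \<in> T}"
    moreover have "{f. coadj_orbit f \<in> S \<inter> T} = {f. coadj_orbit f \<in> S} \<inter> {f. coadj_orbit f \<in> T}"
      by auto
    ultimately show "S \<inter> T \<subseteq> n7_orbits \<and> open {f. coadj_orbit f \<in> S \<inter> T}" by auto
  next
    fix K :: "(real^7) set set set"
    assume a: "\<forall>S\<in>K. S \<subseteq> n7_orbits \<and> open {f. coadj_orbit f \<in> S}"
    have "{f. coadj_orbit f \<in> \<Union>K} = (\<Union>S\<in>K. {f. coadj_orbit f \<in> S})" by auto
    then show "\<Union>K \<subseteq> n7_orbits \<and> open {f. coadj_orbit f \<in> \<Union>K}"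
      using a by auto
  qed
  then show ?thesis unfolding orbit_space_def by simp
qed

lemma topspace_orbit_space: "topspace orbit_space = n7_orbits"
proof -
  have "openin orbit_space n7_orbits"
    unfolding orbit_space_open by (simp add: n7_orbits_def)
  then have "n7_orbits \<subseteq> topspace orbit_space" by (rule openin_subset)
  moreover have "topspace orbit_space \<subseteq> n7_orbits"
    using orbit_space_open[of "topspace orbit_space"] by simp
  ultimately show ?thesis by blast
qed

lemma Gamma2_eq: "Gamma2 = coadj_orbit ` {f. f$7 \<noteq> 0}"
proof
  show "Gamma2 \<subseteq> coadj_orbit ` {f. f$7 \<noteq> 0}"
  proof
    fix S assume "S \<in> Gamma2"
    then obtain h f where S: "S = coadj_orbit h" and "f \<in> S" "f$7 \<noteq> 0"
      by (auto simp: Gamma2_def n7_orbits_def)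
    then obtain Y where "f = n7_coadj Y h" by (auto simp: coadj_orbit_def)
    then have "h$7 \<noteq> 0" using \<open>f$7 \<noteq> 0\<close> by (simp add: coadj_comp)
    then show "S \<in> coadj_orbit ` {f. f$7 \<noteq> 0}" using S by blast
  qed
  show "coadj_orbit ` {f. f$7 \<noteq> 0} \<subseteq> Gamma2"
  proof
    fix S assume "S \<in> coadj_orbit ` {f. f$7 \<noteq> 0}"
    then obtain f where S: "S = coadj_orbit f" and f: "f$7 \<noteq> 0" by blast
    have "f \<in> S" unfolding S coadj_orbit_def using coadj_zero by (metis rangeI)
    then show "S \<in> Gamma2" using S f by (auto simp: Gamma2_def n7_orbits_def)
  qed
qed

lemma orbit_in_Gamma2: "coadj_orbit f \<in> Gamma2 \<longleftrightarrow> f$7 \<noteq> 0"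
proof
  assume "coadj_orbit f \<in> Gamma2"
  then obtain h where "h$7 \<noteq> 0" "coadj_orbit f = coadj_orbit h" using Gamma2_eq by auto
  moreover have "f \<in> coadj_orbit f" unfolding coadj_orbit_def using coadj_zero by (metis rangeI)
  ultimately obtain Y where "f = n7_coadj Y h" by (auto simp: coadj_orbit_def)
  then show "f$7 \<noteq> 0" using \<open>h$7 \<noteq> 0\<close> by (simp add: coadj_comp)
qed (auto simp: Gamma2_eq)

definition G :: "(real^7) set \<Rightarrow> real \<times> real \<times> real" where
  "G S = phi (SOME f. f \<in> S \<and> f$7 \<noteq> 0)"

lemma G_orbit:
  assumes "f$7 \<noteq> 0" shows "G (coadj_orbit f) = phi f"
proof -
  have "f \<in> coadj_orbit f \<and> f$7 \<noteq> 0" unfolding coadj_orbit_def using coadj_zero assms by (metis rangeI)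
  then have "(SOME g. g \<in> coadj_orbit f \<and> g$7 \<noteq> 0) \<in> coadj_orbit f" by (metis (mono_tags, lifting) someI)
  then show ?thesis unfolding G_def orbit_char[OF assms] by simp
qed

lemma std_eq: "std_functional a b c = a *\<^sub>R axis 3 1 + b *\<^sub>R axis 4 1 + c *\<^sub>R axis 7 1"
  by (rule vec7_eqI) (simp_all add: std_comp axis_def)

lemma cont_std: "continuous_on UNIV (\<lambda>(a, b, c). std_functional a b c)"
  unfolding std_eq case_prod_beta by (intro continuous_intros)

lemma cont_phi: "continuous_on {f. f$7 \<noteq> (0::real)} phi"
  unfolding phi_def by (intro continuous_intros) auto

lemma open_f7: "open {f::real^7. f$7 \<noteq> 0}"
proof -
  have "{f::real^7. f$7 \<noteq> 0} = (\<lambda>f. f$7) -` (- {0})" by auto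
  then show ?thesis by (metis open_vimage_vec_nth open_Compl closed_singleton)
qed

theorem mainTheorem2:
  shows "Hausdorff_space (subtopology orbit_space Gamma2) \<and>
    homeomorphic_map (top_of_set {p :: real \<times> real \<times> real. snd (snd p) \<noteq> 0})
      (subtopology orbit_space Gamma2)
      (\<lambda>(a, b, c). coadj_orbit (std_functional a b c))"
proof -
  define D where "D = {p :: real \<times> real \<times> real. snd (snd p) \<noteq> 0}"
  define F where "F = (\<lambda>(a, b, c). coadj_orbit (std_functional a b c))"
  define Y where "Y = subtopology orbit_space Gamma2"
  have openD: "open D"
  proof -
    have "D = (\<lambda>p. snd (snd p)) -` (- {0})" by (auto simp: D_def)
    moreover have "open ((\<lambda>p::real \<times> real \<times> real. snd (snd p)) -` (- {0}))"
      using continuous_open_preimage[of UNIV "\<lambda>p::real \<times> real \<times> real. snd (snd p)" "- {0}"]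
      by (simp add: continuous_on_snd continuous_on_id open_Compl)
    ultimately show ?thesis by simp
  qed
  have G2sub: "Gamma2 \<subseteq> n7_orbits" by (auto simp: Gamma2_def)
  have topY: "topspace Y = Gamma2"
    using G2sub by (simp add: Y_def topspace_orbit_space Int_absorb1)
  have F_in: "F p \<in> Gamma2" if "p \<in> D" for p
  proof -
    obtain a b c where p: "p = (a, b, c)" by (cases p) auto
    then have "c \<noteq> 0" using that by (simp add: D_def)
    then show ?thesis by (simp add: F_def p orbit_in_Gamma2 std_comp)
  qed
  have GF: "G (F p) = p" if "p \<in> D" for p
  proof -
    obtain a b c where p: "p = (a, b, c)" by (cases p) auto
    then have "c \<noteq> 0" using that by (simp add: D_def)
    then show ?thesis by (simp add: F_def p G_orbit std_comp phi_std)
  qed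
  have FG: "F (G S) = S \<and> G S \<in> D" if SG: "S \<in> Gamma2" for S
  proof -
    obtain f where S: "S = coadj_orbit f" and f: "f$7 \<noteq> 0" using SG Gamma2_eq by auto
    obtain a b c where abc: "phi f = (a, b, c)" by (cases "phi f") auto
    have c: "c = f$7" using abc by (simp add: phi_def)
    have "F (G S) = coadj_orbit (std_functional a b c)"
      by (simp add: S G_orbit[OF f] abc F_def)
    also have "\<dots> = {g. phi g = phi (std_functional a b c)}"
      using f c by (intro orbit_char) (simp add: std_comp)
    also have "\<dots> = S" using orbit_char[OF f] by (simp add: S phi_std abc)
    finally show ?thesis using f c abc by (simp add: S G_orbit D_def)
  qed
  have contF: "continuous_map (top_of_set D) Y F"
    unfolding continuous_map_def
  proof (intro conjI allI impI)
    show "F \<in> topspace (top_of_set D) \<rightarrow> topspace Y"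
      using F_in topY by auto
  next
    fix U assume "openin Y U"
    then obtain T where T: "openin orbit_space T" and U: "U = T \<inter> Gamma2"
      unfolding Y_def openin_subtopology by blast
    have "open {f. coadj_orbit f \<in> T}" using T orbit_space_open by blast
    then have o: "open (UNIV \<inter> (\<lambda>(a, b, c). std_functional a b c) -` {f. coadj_orbit f \<in> T})"
      by (intro continuous_open_preimage cont_std) auto
    have "{x \<in> topspace (top_of_set D). F x \<in> U} = D \<inter> (UNIV \<inter> (\<lambda>(a, b, c). std_functional a b c) -` {f. coadj_orbit f \<in> T})"
      using F_in unfolding U by (auto simp: F_def)
    then show "openin (top_of_set D) {x \<in> topspace (top_of_set D). F x \<in> U}"
      using o by auto
  qed
  have contG: "continuous_map Y (top_of_set D) G"
    unfolding continuous_map_def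
  proof (intro conjI allI impI)
    show "G \<in> topspace Y \<rightarrow> topspace (top_of_set D)"
      using FG topY by auto
  next
    fix U assume "openin (top_of_set D) U"
    then obtain T where T: "open T" and U: "U = D \<inter> T" unfolding openin_open by blast
    define V where "V = {S \<in> Gamma2. G S \<in> U}"
    have pre: "{f. coadj_orbit f \<in> V} = {f. f$7 \<noteq> 0} \<inter> phi -` T"
    proof (rule set_eqI)
      fix f
      show "f \<in> {f. coadj_orbit f \<in> V} \<longleftrightarrow> f \<in> {f. f$7 \<noteq> 0} \<inter> phi -` T"
      proof (cases "f$7 = 0")
        case True then show ?thesis by (simp add: V_def orbit_in_Gamma2)
      next
        case False
        have "phi f \<in> D" using False by (simp add: phi_def D_def)
        then show ?thesis using False by (auto simp: V_def orbit_in_Gamma2 G_orbit U)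
      qed
    qed
    have "open {f. coadj_orbit f \<in> V}"
      unfolding pre using cont_phi open_f7 T by (rule continuous_open_preimage)
    moreover have "V \<subseteq> n7_orbits" using G2sub by (auto simp: V_def)
    ultimately have "openin orbit_space V" by (simp add: orbit_space_open)
    moreover have "{x \<in> topspace Y. G x \<in> U} = V \<inter> Gamma2" by (auto simp: topY V_def)
    ultimately show "openin Y {x \<in> topspace Y. G x \<in> U}"
      unfolding Y_def openin_subtopology by blast
  qed
  have hm: "homeomorphic_map (top_of_set D) Y F"
    unfolding homeomorphic_map_maps homeomorphic_maps_def
    using contF contG GF FG topY by auto
  have "Hausdorff_space (top_of_set D)"
    by (simp add: Hausdorff_space_subtopology)
  then have "Hausdorff_space Y"
    using homeomorphic_Hausdorff_space[OF homeomorphic_map_imp_homeomorphic_space[OF hm]] by simp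
  then show ?thesis using hm by (simp add: Y_def D_def F_def)
qed

end
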